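(* Let $\alpha$ be a complex number with $0<|\alpha|<1$ and let $\alpha_n=\alpha$ for all $n\ge0$ (Geronimus polynomials). Then, for every nonnegative integer $m$, as formal power series in $z$, \[ \sum_{n\ge0}\mu_{n,m}z^n=\frac{2|\alpha|^2(2z)^m}{\left(2|\alpha|^2+\alpha-\alpha z-\alpha\sqrt{1-2z+4|\alpha|^2z+z^2}\right)\left(1+z+\sqrt{1-2z+4|\alpha|^2z+z^2}\right)^m}, \] where the square root is the formal power series with constant term $1$.
   Context: For a polynomial $f(z)=\sum_{k=0}^n a_kz^k$ of degree $n$, write $\overline{f}(z)=\sum_k\overline{a_k}z^k$ and $f^*(z)=z^n\overline{f}(1/z)$. Given $(\alpha_n)$ with $|\alpha_n|<1$, define monic $\Phi_n$ by $\Phi_0=1$, $\Phi_{n+1}(z)=z\Phi_n(z)-\overline{\alpha_n}\Phi_n^*(z)$. Let $\mathcal{L}$ be the unique linear functional on Laurent polynomials with $\mathcal{L}(1)=1$ and $\mathcal{L}(\Phi_m(z)\overline{\Phi_n}(1/z))=0$ for $m\neq n$; set $\langle f,g\rangle=\mathcal{L}(f(z)\overline{g}(1/z))$ and $\mu_{n,m}=\langle\Phi_m(z),z^n\rangle/\langle\Phi_m,\Phi_m\rangle$. *)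

theory Defs
  imports Complex_Main "HOL-Computational_Algebra.Polynomial" "HOL-Computational_Algebra.Formal_Power_Series"
begin

text \<open>Reversed conjugate polynomial: f*(z) = z^n conj-f(1/z), n = degree f.\<close>
definition poly_star :: "complex poly \<Rightarrow> complex poly" where
  "poly_star f = (\<Sum>k\<le>degree f. monom (cnj (coeff f (degree f - k))) k)"

fun Phi :: "(nat \<Rightarrow> complex) \<Rightarrow> nat \<Rightarrow> complex poly" where
  "Phi a 0 = 1"
| "Phi a (Suc n) = [:0, 1:] * Phi a n - smult (cnj (a n)) (poly_star (Phi a n))"

text \<open>A linear functional L on Laurent polynomials is given by its moments c k = L(z^k), k \<in> \<int>.
  The form <f,g> = L(f(z) conj-g(1/z)) in terms of the moments.\<close>
definition ipL :: "(int \<Rightarrow> complex) \<Rightarrow> complex poly \<Rightarrow> complex poly \<Rightarrow> complex" where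
  "ipL c f g = (\<Sum>j\<le>degree f. \<Sum>k\<le>degree g. coeff f j * cnj (coeff g k) * c (int j - int k))"

definition moments :: "(nat \<Rightarrow> complex) \<Rightarrow> int \<Rightarrow> complex" where
  "moments a = (THE c. c 0 = 1 \<and> (\<forall>m n. m \<noteq> n \<longrightarrow> ipL c (Phi a m) (Phi a n) = 0))"

definition ip :: "(nat \<Rightarrow> complex) \<Rightarrow> complex poly \<Rightarrow> complex poly \<Rightarrow> complex" where
  "ip a f g = ipL (moments a) f g"

definition mu :: "(nat \<Rightarrow> complex) \<Rightarrow> nat \<Rightarrow> nat \<Rightarrow> complex" where
  "mu a n m = ip a (Phi a m) (monom 1 n) / ip a (Phi a m) (Phi a m)"

definition fps_sqrt1 :: "complex fps \<Rightarrow> complex fps" where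
  "fps_sqrt1 Q = (THE S. fps_nth S 0 = 1 \<and> S ^ 2 = Q)"

end

theory Submission imports Defs begin
unbundle fps_syntax

lemma coeff_poly_star: "coeff (poly_star f) i = (if i \<le> degree f then cnj (coeff f (degree f - i)) else 0)"
  unfolding poly_star_def by (simp add: coeff_sum coeff_monom)

lemma degree_poly_star: "degree (poly_star f) \<le> degree f"
  by (rule degree_le) (simp add: coeff_poly_star)

lemma coeff_Phi_Suc: "coeff (Phi a (Suc n)) i =
   (if i = 0 then 0 else coeff (Phi a n) (i - 1)) - cnj (a n) * coeff (poly_star (Phi a n)) i"
  by (cases i) (simp_all add: coeff_pCons)

lemma Phi_deg: "degree (Phi a n) = n \<and> coeff (Phi a n) n = 1"
proof (induction n)
  case 0 then show ?case by simp
next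
  case (Suc n)
  have c: "coeff (Phi a (Suc n)) (Suc n) = 1"
    using Suc by (simp add: coeff_Phi_Suc coeff_poly_star)
  have "degree (Phi a (Suc n)) \<le> Suc n"
    by (rule degree_le) (use Suc in \<open>auto simp: coeff_Phi_Suc coeff_poly_star coeff_eq_0\<close>)
  moreover have "Suc n \<le> degree (Phi a (Suc n))" using c by (intro le_degree) simp
  ultimately have "degree (Phi a (Suc n)) = Suc n" by (rule antisym)
  with c show ?case by blast
qed

lemma degree_Phi[simp]: "degree (Phi a n) = n" using Phi_deg by blast
lemma coeff_Phi_top[simp]: "coeff (Phi a n) n = 1" using Phi_deg by blast

definition E :: "(int \<Rightarrow> complex) \<Rightarrow> complex poly \<Rightarrow> int \<Rightarrow> complex" where
  "E c f k = (\<Sum>j\<le>degree f. coeff f j * c (int j - k))"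

lemma E_ext: assumes "degree f \<le> M" shows "E c f k = (\<Sum>j\<le>M. coeff f j * c (int j - k))"
  unfolding E_def
  by (rule sum.mono_neutral_left) (use assms in \<open>auto simp: coeff_eq_0\<close>)

lemma E_diff: "E c (f - smult b g) k = E c f k - b * E c g k"
proof -
  let ?M = "max (degree f) (degree g)"
  have "degree (f - smult b g) \<le> ?M"
    by (metis degree_diff_le degree_smult_le max.cobounded1 max.cobounded2 order.trans)
  then have "E c (f - smult b g) k = (\<Sum>j\<le>?M. coeff (f - smult b g) j * c (int j - k))" by (rule E_ext)
  also have "\<dots> = (\<Sum>j\<le>?M. coeff f j * c (int j - k)) - b * (\<Sum>j\<le>?M. coeff g j * c (int j - k))"
    by (simp add: algebra_simps sum_subtractf sum_distrib_left)
  also have "\<dots> = E c f k - b * E c g k" by (simp add: E_ext[of f ?M] E_ext[of g ?M])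
  finally show ?thesis .
qed

lemma E_shift: "E c (pCons 0 f) k = E c f (k - 1)"
proof (cases "f = 0")
  case True then show ?thesis by (simp add: E_def)
next
  case False
  then have "E c (pCons 0 f) k = (\<Sum>j\<le>Suc (degree f). coeff (pCons 0 f) j * c (int j - k))"
    by (simp add: E_def)
  also have "\<dots> = (\<Sum>j\<le>degree f. coeff f j * c (int j - (k - 1)))"
    by (subst sum.atMost_Suc_shift) (simp add: algebra_simps)
  finally show ?thesis by (simp add: E_def)
qed

lemma E_Phi_Suc: "E c (Phi a (Suc n)) k = E c (Phi a n) (k - 1) - cnj (a n) * E c (poly_star (Phi a n)) k"
proof -
  have "[:0, 1:] * Phi a n = pCons 0 (Phi a n)" by simp
  then show ?thesis by (simp add: E_diff E_shift)
qed

declare Phi.simps(2)[simp del]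

definition herm :: "(int \<Rightarrow> complex) \<Rightarrow> bool" where
  "herm c \<longleftrightarrow> (\<forall>k. c (- k) = cnj (c k))"

lemma E_star: assumes "herm c"
  shows "E c (poly_star f) k = cnj (E c f (int (degree f) - k))"
proof -
  let ?d = "degree f"
  have "E c (poly_star f) k = (\<Sum>i\<le>?d. coeff (poly_star f) i * c (int i - k))"
    by (rule E_ext[OF degree_poly_star])
  also have "\<dots> = (\<Sum>i\<le>?d. cnj (coeff f (?d - i)) * c (int i - k))"
    by (simp add: coeff_poly_star)
  also have "\<dots> = (\<Sum>j\<le>?d. cnj (coeff f j) * c (int ?d - int j - k))"
    by (rule sum.reindex_bij_witness[of _ "\<lambda>j. ?d - j" "\<lambda>i. ?d - i"]) (auto simp: of_nat_diff)
  also have "\<dots> = (\<Sum>j\<le>?d. cnj (coeff f j * c (int j - (int ?d - k))))"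
    using assms unfolding herm_def
    by (intro sum.cong refl) (metis minus_diff_eq complex_cnj_mult diff_diff_eq2 diff_diff_eq)
  also have "\<dots> = cnj (E c f (int ?d - k))" by (simp add: E_def)
  finally show ?thesis .
qed

function cpos :: "(nat \<Rightarrow> complex) \<Rightarrow> nat \<Rightarrow> complex" where
  "cpos a n = (if n = 0 then 1 else - (\<Sum>j<n. coeff (Phi a n) j * cpos a j))"
  by auto
termination by (relation "measure snd") auto

declare cpos.simps[simp del]

definition cc :: "(nat \<Rightarrow> complex) \<Rightarrow> int \<Rightarrow> complex" where
  "cc a k = (if 0 \<le> k then cpos a (nat k) else cnj (cpos a (nat (- k))))"

lemma herm_cc: "herm (cc a)"
  unfolding herm_def cc_def by (auto simp: cpos.simps[of a 0])

lemma E_top: "E c (Phi a n) k = c (int n - k) + (\<Sum>j<n. coeff (Phi a n) j * c (int j - k))"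
  by (simp add: E_def sum.atMost_Suc lessThan_Suc_atMost[symmetric] del: lessThan_Suc_atMost)

lemma orth_cc: "0 \<le> k \<Longrightarrow> k < int n \<Longrightarrow> E (cc a) (Phi a n) k = 0"
proof (induction n arbitrary: k)
  case 0 then show ?case by simp
next
  case (Suc n)
  show ?case
  proof (cases "k = 0")
    case True
    have "E (cc a) (Phi a (Suc n)) 0 = cpos a (Suc n) + (\<Sum>j<Suc n. coeff (Phi a (Suc n)) j * cpos a j)"
      by (simp add: E_top[of _ a "Suc n"] cc_def) (simp add: nat_add_distrib)
    also have "\<dots> = 0" by (subst cpos.simps) simp
    finally show ?thesis using True by simp
  next
    case False
    have "E (cc a) (Phi a (Suc n)) k = E (cc a) (Phi a n) (k - 1) - cnj (a n) * cnj (E (cc a) (Phi a n) (int n - k))"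
      by (simp add: E_Phi_Suc E_star[OF herm_cc])
    also have "\<dots> = 0" using Suc False by simp
    finally show ?thesis .
  qed
qed

lemma ipL_E: "ipL c f g = (\<Sum>k\<le>degree g. cnj (coeff g k) * E c f (int k))"
  unfolding ipL_def E_def
  by (subst sum.swap) (simp add: sum_distrib_left algebra_simps)

lemma ipL_herm: assumes "herm c" shows "ipL c f g = cnj (ipL c g f)"
proof -
  have "cnj (ipL c g f) = (\<Sum>j\<le>degree g. \<Sum>k\<le>degree f. cnj (coeff g j) * coeff f k * c (int k - int j))"
    unfolding ipL_def cnj_sum
  proof (intro sum.cong refl)
    fix j k
    have "cnj (c (int j - int k)) = c (int k - int j)"
      using assms unfolding herm_def by (metis minus_diff_eq)
    then show "cnj (coeff g j * cnj (coeff f k) * c (int j - int k)) = cnj (coeff g j) * coeff f k * c (int k - int j)"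
      by simp
  qed
  also have "\<dots> = ipL c f g" unfolding ipL_def by (subst sum.swap) (simp add: algebra_simps)
  finally show ?thesis by simp
qed

lemma ipL_Phi_lower: assumes "n < m" shows "ipL (cc a) (Phi a m) (Phi a n) = 0"
  unfolding ipL_E using assms by (auto intro!: sum.neutral orth_cc)

definition good :: "(nat \<Rightarrow> complex) \<Rightarrow> (int \<Rightarrow> complex) \<Rightarrow> bool" where
  "good a c \<longleftrightarrow> c 0 = 1 \<and> (\<forall>m n. m \<noteq> n \<longrightarrow> ipL c (Phi a m) (Phi a n) = 0)"

lemma good_cc: "good a (cc a)"
  unfolding good_def
proof (intro conjI allI impI)
  show "cc a 0 = 1" by (simp add: cc_def cpos.simps)
  fix m n :: nat assume "m \<noteq> n"
  then consider "n < m" | "m < n" by linarith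
  then show "ipL (cc a) (Phi a m) (Phi a n) = 0"
  proof cases
    case 1 then show ?thesis by (rule ipL_Phi_lower)
  next
    case 2 then show ?thesis using ipL_herm[OF herm_cc, of a "Phi a m" "Phi a n"] ipL_Phi_lower[OF 2] by simp
  qed
qed

lemma good_unique_nat: assumes "good a c1" "good a c2"
  shows "c1 (int n) = c2 (int n) \<and> c1 (- int n) = c2 (- int n)"
proof (induction n rule: less_induct)
  case (less n)
  show ?case
  proof (cases "n = 0")
    case True then show ?thesis using assms by (simp add: good_def)
  next
    case False
    have p1: "c (int n) = - (\<Sum>j<n. coeff (Phi a n) j * c (int j))" if "good a c" for c
    proof -
      have H: "\<forall>m n. m \<noteq> n \<longrightarrow> ipL c (Phi a m) (Phi a n) = 0" using that unfolding good_def by blast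
      have "ipL c (Phi a n) (Phi a 0) = 0" by (rule H[rule_format]) (use False in simp)
      then have "E c (Phi a n) 0 = 0" by (simp add: ipL_E)
      then have "c (int n) + (\<Sum>j<n. coeff (Phi a n) j * c (int j)) = 0" by (simp add: E_top)
      then show ?thesis by (simp only: eq_neg_iff_add_eq_0)
    qed
    have p2: "c (- int n) = - (\<Sum>j<n. cnj (coeff (Phi a n) j) * c (- int j))" if "good a c" for c
    proof -
      have H: "\<forall>m n. m \<noteq> n \<longrightarrow> ipL c (Phi a m) (Phi a n) = 0" using that unfolding good_def by blast
      have "ipL c (Phi a 0) (Phi a n) = 0" by (rule H[rule_format]) (use False in simp)
      then have "(\<Sum>k\<le>n. cnj (coeff (Phi a n) k) * c (- int k)) = 0"
        by (simp add: ipL_def)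
      then have "c (- int n) + (\<Sum>j<n. cnj (coeff (Phi a n) j) * c (- int j)) = 0"
        by (simp add: sum.atMost_Suc lessThan_Suc_atMost[symmetric] add.commute del: lessThan_Suc_atMost)
      then show ?thesis by (simp only: eq_neg_iff_add_eq_0)
    qed
    have IH: "c1 (int j) = c2 (int j) \<and> c1 (- int j) = c2 (- int j)" if "j < n" for j
      using less.IH[OF that] .
    have "(\<Sum>j<n. coeff (Phi a n) j * c1 (int j)) = (\<Sum>j<n. coeff (Phi a n) j * c2 (int j))"
      using IH by (intro sum.cong) simp_all
    moreover have "(\<Sum>j<n. cnj (coeff (Phi a n) j) * c1 (- int j)) = (\<Sum>j<n. cnj (coeff (Phi a n) j) * c2 (- int j))"
      using IH by (intro sum.cong) simp_all
    ultimately show ?thesis using p1[OF assms(1)] p1[OF assms(2)] p2[OF assms(1)] p2[OF assms(2)] by argo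
  qed
qed

lemma good_unique: assumes "good a c1" "good a c2" shows "c1 = c2"
proof
  fix k :: int
  show "c1 k = c2 k"
  proof (cases "0 \<le> k")
    case True then show ?thesis using good_unique_nat[OF assms, of "nat k"] by simp
  next
    case False then show ?thesis using good_unique_nat[OF assms, of "nat (- k)"] by simp
  qed
qed

lemma moments_eq: "moments a = cc a"
  unfolding moments_def
  using good_cc[of a] good_unique[OF _ good_cc[of a]] unfolding good_def
  by (rule the_equality) blast+

lemma ipL_self: "ipL (cc a) (Phi a n) (Phi a n) = E (cc a) (Phi a n) (int n)"
proof -
  have "ipL (cc a) (Phi a n) (Phi a n) = (\<Sum>k<n. cnj (coeff (Phi a n) k) * E (cc a) (Phi a n) (int k)) + E (cc a) (Phi a n) (int n)"
    by (simp add: ipL_E sum.atMost_Suc lessThan_Suc_atMost[symmetric] del: lessThan_Suc_atMost)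
  also have "(\<Sum>k<n. cnj (coeff (Phi a n) k) * E (cc a) (Phi a n) (int k)) = 0"
    by (auto intro!: sum.neutral orth_cc)
  finally show ?thesis by simp
qed

lemma ipL_monom: "ipL c f (monom 1 n) = E c f (int n)"
  by (simp add: ipL_E degree_monom_eq coeff_monom sum.atMost_Suc lessThan_Suc_atMost[symmetric] del: lessThan_Suc_atMost)

lemma E_star_Phi: "E (cc a) (poly_star (Phi a n)) k = cnj (E (cc a) (Phi a n) (int n - k))"
  using E_star[OF herm_cc, of a "Phi a n" k] by simp

lemma E_m1: "E (cc a) (Phi a n) (-1) = cnj (a n) * cnj (E (cc a) (Phi a n) (int n))"
proof -
  have "E (cc a) (Phi a (Suc n)) 0 = 0" by (rule orth_cc) auto
  then show ?thesis by (simp add: E_Phi_Suc E_star_Phi)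
qed

lemma N_Suc: "E (cc a) (Phi a (Suc n)) (int (Suc n)) = (1 - a n * cnj (a n)) * E (cc a) (Phi a n) (int n)"
  by (simp add: E_Phi_Suc E_star_Phi E_m1 algebra_simps)

lemma Estar_Suc: "E (cc a) (poly_star (Phi a (Suc m))) k = E (cc a) (poly_star (Phi a m)) k - a m * E (cc a) (Phi a m) (k - 1)"
  by (simp add: E_star_Phi E_Phi_Suc algebra_simps)

lemma N_const: "E (cc (\<lambda>_. \<alpha>)) (Phi (\<lambda>_. \<alpha>) n) (int n) = (1 - \<alpha> * cnj \<alpha>) ^ n"
proof (induction n)
  case 0 then show ?case by (simp add: E_def cc_def cpos.simps)
next
  case (Suc n) then show ?case using N_Suc[of "\<lambda>_. \<alpha>" n] by simp
qed

lemma alg1: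
  fixes X S iu iD A B R :: "complex fps"
  assumes "S^2 = 1 - 2*X + 4*R*X + X^2" "(1+X+S)*iu = 1" "(2*R + A - A*X - A*S)*iD = 1" "A*B = R"
  shows "(1-R)*(2*R*iD)*(2*X*iu) = X*(2*R*iD) - B*(2*R*iD - 1)"
  using assms by algebra

lemma alg2:
  fixes X S iu iD A B R :: "complex fps"
  assumes "S^2 = 1 - 2*X + 4*R*X + X^2" "(1+X+S)*iu = 1" "(2*R + A - A*X - A*S)*iD = 1" "A*B = R"
  shows "(1-R)*(2*R*iD - 1)*(2*X*iu) = (2*R*iD - 1) - A*X*(2*R*iD)"
  using assms by algebra

lemma fps_unique_aux:
  fixes D Ee :: "nat \<Rightarrow> complex fps"
  assumes rD: "\<And>m. D (Suc m) = fps_X * D m - fps_const b * Ee m"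
    and rE: "\<And>m. Ee (Suc m) = Ee m - fps_const a * (fps_X * D m)"
    and D0: "D 0 = Ee 0" and low: "\<And>m i. i < m \<Longrightarrow> D m $ i = 0" and b: "b \<noteq> 0"
  shows "D 0 = 0"
proof (rule ccontr)
  assume nz: "D 0 \<noteq> 0"
  define p where "p = subdegree (D 0)"
  have Dp: "D 0 $ p \<noteq> 0" using nz p_def by simp
  have Dlow: "\<And>i. i < p \<Longrightarrow> D 0 $ i = 0" using p_def by auto
  have claim: "(\<forall>i<p. D m $ i = 0 \<and> Ee m $ i = 0) \<and> Ee m $ p = D 0 $ p" for m
  proof (induction m)
    case 0 then show ?case using Dlow D0 by auto
  next
    case (Suc m)
    have x: "(fps_X * D m) $ i = 0" if "i \<le> p" for i
      using Suc that by (cases i) auto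
    show ?case using Suc x by (auto simp: rD rE)
  qed
  have "D (Suc p) $ p = - b * D 0 $ p"
    using claim[of p] by (simp add: rD)
  moreover have "D (Suc p) $ p = 0" by (rule low) simp
  ultimately show False using b Dp by simp
qed

lemma sqrt1_props:
  fixes Q :: "complex fps" assumes "Q $ 0 = 1"
  shows "fps_sqrt1 Q $ 0 = 1 \<and> (fps_sqrt1 Q)^2 = Q"
proof -
  define T where "T = fps_radical (\<lambda>_ _. 1) 2 Q"
  have T0: "T $ 0 = 1" by (simp add: T_def)
  have "fps_radical (\<lambda>_ _. 1) (Suc 1) Q ^ Suc 1 = Q"
    by (rule power_radical[THEN iffD1]) (use assms in simp_all)
  then have T2: "T ^ 2 = Q" unfolding T_def by (simp only: Suc_1)
  have uniq: "S = T" if "S $ 0 = 1" "S ^ 2 = Q" for S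
  proof -
    have "(S - T) * (S + T) = 0" using that T2 by (simp add: algebra_simps power2_eq_square)
    moreover have "S + T \<noteq> 0"
    proof
      assume "S + T = 0"
      then have "(S + T) $ 0 = 0" by simp
      then show False using that T0 by simp
    qed
    ultimately show ?thesis by simp
  qed
  have "fps_sqrt1 Q = T"
    unfolding fps_sqrt1_def
  proof (rule the_equality)
    show "T $ 0 = 1 \<and> T ^ 2 = Q" using T0 T2 by (intro conjI)
  next
    fix S assume "S $ 0 = 1 \<and> S ^ 2 = Q"
    then show "S = T" using uniq by blast
  qed
  then show ?thesis using T0 T2 by (simp only:)
qed

theorem proposition4p1:
  fixes \<alpha> :: complex and m :: nat
  assumes "0 < cmod \<alpha>" and "cmod \<alpha> < 1"
  shows "Abs_fps (\<lambda>n. mu (\<lambda>_. \<alpha>) n m) =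
    (let r = complex_of_real ((cmod \<alpha>)\<^sup>2);
         S = fps_sqrt1 (1 - fps_const 2 * fps_X + fps_const (4 * r) * fps_X + fps_X ^ 2)
     in fps_const (2 * r) * (fps_const 2 * fps_X) ^ m /
        ((fps_const (2 * r + \<alpha>) - fps_const \<alpha> * fps_X - fps_const \<alpha> * S) *
         (1 + fps_X + S) ^ m))"
proof -
  define a where "a = (\<lambda>_::nat. \<alpha>)"
  define c where "c = cc a"
  define r where "r = \<alpha> * cnj \<alpha>"
  have rdef: "complex_of_real ((cmod \<alpha>)\<^sup>2) = r" unfolding r_def by (rule complex_norm_square)
  have r0: "r \<noteq> 0" using assms(1) rdef[symmetric] by auto
  have r1: "1 - r \<noteq> 0"
  proof
    assume "1 - r = 0"
    then have "complex_of_real ((cmod \<alpha>)\<^sup>2) = 1" using rdef by simp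
    then have "(cmod \<alpha>)\<^sup>2 = 1" using of_real_eq_1_iff by blast
    then show False using assms by (simp add: power2_eq_1_iff)
  qed
  have b0: "cnj \<alpha> \<noteq> 0" using assms(1) by simp
  have cr: "cnj r = r" by (simp add: r_def)
  define X :: "complex fps" where "X = fps_X"
  define R where "R = fps_const r"
  define A where "A = fps_const \<alpha>"
  define B where "B = fps_const (cnj \<alpha>)"
  define Q where "Q = 1 - fps_const 2 * fps_X + fps_const (4 * r) * fps_X + (fps_X::complex fps) ^ 2"
  define S where "S = fps_sqrt1 Q"
  have Q0: "Q $ 0 = 1" by (simp add: Q_def)
  have S0: "S $ 0 = 1" and S2: "S^2 = Q" using sqrt1_props[OF Q0] by (simp_all add: S_def)
  have Qalt: "Q = 1 - 2*X + 4*R*X + X^2"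
    by (simp add: Q_def X_def R_def numeral_fps_const)
  define u where "u = 1 + X + S"
  define iu where "iu = inverse u"
  define D1 where "D1 = fps_const (2 * r + \<alpha>) - fps_const \<alpha> * fps_X - fps_const \<alpha> * S"
  define iD where "iD = inverse D1"
  have u0: "u $ 0 = 2" by (simp add: u_def X_def S0)
  have D10: "D1 $ 0 = 2 * r" by (simp add: D1_def S0)
  have uiu: "(1+X+S)*iu = 1" unfolding iu_def u_def[symmetric] using u0 by (simp add: inverse_mult_eq_1')
  have D1alt: "D1 = 2*R + A - A*X - A*S"
    by (simp add: D1_def R_def A_def X_def numeral_fps_const)
  have DiD: "(2*R + A - A*X - A*S)*iD = 1" unfolding iD_def D1alt[symmetric] using D10 r0
    by (simp add: inverse_mult_eq_1')
  have AB: "A*B = R" by (simp add: A_def B_def R_def r_def)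
  define g where "g = 2*R*iD"
  define l where "l = 2*X*iu"
  have I1: "(1-R)*g*l = X*g - B*(g - 1)"
    unfolding g_def l_def by (rule alg1[OF S2[unfolded Qalt] uiu DiD AB])
  have I2: "(1-R)*(g - 1)*l = (g - 1) - A*X*g"
    unfolding g_def l_def by (rule alg2[OF S2[unfolded Qalt] uiu DiD AB])
  define N where "N = (\<lambda>m::nat. (1 - r) ^ m)"
  define NN where "NN = (\<lambda>m. fps_const (N m))"
  have NNs: "NN (Suc m) = (1 - R) * NN m" for m by (simp add: NN_def N_def R_def) (metis fps_const_1_eq_1 fps_const_mult fps_const_sub)
  have NN0: "NN 0 = 1" by (simp add: NN_def N_def)
  have Nc: "E c (Phi a m) (int m) = N m" for m
    unfolding c_def a_def N_def r_def by (rule N_const)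
  have cN: "cnj (N m) = N m" for m by (simp add: N_def cr)
  define G where "G = (\<lambda>m. Abs_fps (\<lambda>n. E c (Phi a m) (int n)))"
  define H where "H = (\<lambda>m. Abs_fps (\<lambda>n. E c (poly_star (Phi a m)) (int n)))"
  have recG: "G (Suc m) = X * G m - B * (H m - NN m)" for m
  proof (rule fps_ext)
    fix n show "G (Suc m) $ n = (X * G m - B * (H m - NN m)) $ n"
    proof (cases n)
      case 0
      have "E c (Phi a (Suc m)) 0 = 0" unfolding c_def by (rule orth_cc) auto
      moreover have "E c (poly_star (Phi a m)) 0 = N m"
        unfolding c_def using Nc[of m] cN[of m] by (simp add: E_star_Phi c_def)
      ultimately show ?thesis using 0 by (simp add: G_def H_def X_def B_def NN_def)
    next
      case (Suc i)
      then show ?thesis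
        by (simp add: G_def H_def X_def B_def NN_def c_def E_Phi_Suc a_def)
    qed
  qed
  have recH: "H (Suc m) = H m - A * (X * G m) - R * NN m" for m
  proof (rule fps_ext)
    fix n show "H (Suc m) $ n = (H m - A * (X * G m) - R * NN m) $ n"
    proof (cases n)
      case 0
      have "E c (poly_star (Phi a m)) 0 = N m"
        unfolding c_def using Nc[of m] cN[of m] by (simp add: E_star_Phi c_def)
      moreover have "E c (Phi a m) (-1) = cnj \<alpha> * N m"
        using E_m1[of a m] Nc[of m] cN[of m] by (simp add: c_def a_def)
      ultimately show ?thesis using 0
        by (simp add: G_def H_def X_def A_def R_def NN_def Estar_Suc c_def r_def a_def algebra_simps)
    next
      case (Suc i)
      then show ?thesis
        by (simp add: G_def H_def X_def A_def R_def NN_def c_def Estar_Suc a_def)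
    qed
  qed
  define Gt where "Gt = (\<lambda>m. NN m * (g * l^m))"
  define Ht where "Ht = (\<lambda>m. NN m * (1 + (g - 1) * l^m))"
  have recGt: "Gt (Suc m) = X * Gt m - B * (Ht m - NN m)" for m
  proof -
    have "Gt (Suc m) = NN m * l^m * ((1-R)*g*l)" by (simp add: Gt_def NNs mult_ac)
    also have "\<dots> = NN m * l^m * (X*g - B*(g - 1))" by (simp only: I1)
    also have "\<dots> = X * Gt m - B * (Ht m - NN m)" by (simp add: Gt_def Ht_def algebra_simps)
    finally show ?thesis .
  qed
  have recHt: "Ht (Suc m) = Ht m - A * (X * Gt m) - R * NN m" for m
  proof -
    have "Ht (Suc m) = (1 - R) * NN m + NN m * l^m * ((1-R)*(g - 1)*l)" by (simp add: Ht_def NNs algebra_simps)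
    also have "\<dots> = (1 - R) * NN m + NN m * l^m * ((g - 1) - A*X*g)" by (simp only: I2)
    also have "\<dots> = Ht m - A * (X * Gt m) - R * NN m" by (simp add: Gt_def Ht_def algebra_simps)
    finally show ?thesis .
  qed
  define Dd where "Dd = (\<lambda>m. G m - Gt m)"
  define Ee where "Ee = (\<lambda>m. H m - Ht m)"
  have rD: "Dd (Suc m) = fps_X * Dd m - fps_const (cnj \<alpha>) * Ee m" for m
    unfolding Dd_def Ee_def recG recGt X_def[symmetric] B_def[symmetric] by (simp add: algebra_simps)
  have rE: "Ee (Suc m) = Ee m - fps_const \<alpha> * (fps_X * Dd m)" for m
    unfolding Dd_def Ee_def recH recHt X_def[symmetric] A_def[symmetric] by (simp add: algebra_simps)
  have star1: "poly_star 1 = 1" by (simp add: poly_star_def)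
  have D0: "Dd 0 = Ee 0"
    by (simp add: Dd_def Ee_def G_def H_def Gt_def Ht_def NN0 star1)
  have lpow: "l ^ m = fps_X ^ m * (2 * iu) ^ m" for m
    by (simp add: l_def X_def power_mult_distrib mult_ac)
  have low: "Dd m $ i = 0" if "i < m" for m i
  proof -
    have "G m $ i = 0" unfolding G_def c_def using that by (simp add: orth_cc)
    moreover have "Gt m $ i = 0"
    proof -
      have "Gt m = fps_X ^ m * (NN m * g * (2 * iu) ^ m)" by (simp add: Gt_def lpow mult_ac)
      then show ?thesis using that by (simp add: fps_X_power_mult_nth)
    qed
    ultimately show ?thesis by (simp add: Dd_def)
  qed
  have Dz: "Dd 0 = 0" by (rule fps_unique_aux[OF rD rE D0 low b0]) auto
  have allz: "Dd m = 0 \<and> Ee m = 0" for m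
    by (induction m) (use Dz D0 in \<open>simp_all add: rD rE\<close>)
  have GG: "G m = Gt m" using allz[of m] by (simp add: Dd_def)
  have mu_eq: "mu a n m = E c (Phi a m) (int n) / N m" for n
    by (simp add: mu_def ip_def moments_eq c_def ipL_monom ipL_self Nc[unfolded c_def])
  have Nnz: "N m \<noteq> 0" using r1 by (simp add: N_def)
  have lhs: "Abs_fps (\<lambda>n. mu a n m) = g * l ^ m"
  proof -
    have "Abs_fps (\<lambda>n. mu a n m) = fps_const (inverse (N m)) * G m"
      by (rule fps_ext) (simp add: mu_eq G_def field_simps)
    also have "\<dots> = fps_const (inverse (N m)) * NN m * (g * l^m)" by (simp add: GG Gt_def mult_ac)
    also have "fps_const (inverse (N m)) * NN m = 1" using Nnz by (simp add: NN_def)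
    finally show ?thesis by simp
  qed
  have pw0: "(D1 * u ^ m) $ 0 \<noteq> 0" using D10 u0 r0 by (simp add: fps_nth_power_0)
  have rhs: "fps_const (2 * r) * (fps_const 2 * fps_X) ^ m / (D1 * u ^ m) = g * l ^ m"
  proof -
    have "fps_const (2 * r) * (fps_const 2 * fps_X) ^ m / (D1 * u ^ m)
        = fps_const (2 * r) * (fps_const 2 * fps_X) ^ m * (iD * iu ^ m)"
      using pw0 by (simp add: fps_divide_unit fps_inverse_mult fps_inverse_power iD_def iu_def)
    also have "\<dots> = g * l ^ m"
      by (simp add: g_def l_def R_def X_def numeral_fps_const power_mult_distrib mult_ac)
    finally show ?thesis .
  qed
  show ?thesis
    unfolding Let_def rdef Q_def[symmetric] S_def[symmetric] D1_def[symmetric]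
    using lhs rhs unfolding a_def u_def X_def by simp
qed


end
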